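(* Let $I,J\subset S$ be Borel ideals such that $I_s\subseteq J_s$ for all $s\gg0$ and $p_{S/I}(z)=p_{S/J}(z)+a$ for some $a\in\mathbb N$. Then $I$ and $J$ have the same $x_1$-saturation, i.e. $I_{x_0x_1}=J_{x_0x_1}$.
   Context: $S=K[x_0,\dots,x_n]$, $K$ algebraically closed of characteristic $0$, standard grading, $x_0<x_1<\dots<x_n$. A monomial ideal is Borel if $x^\alpha\in J$, $\alpha_j>0$, $j<n$ imply $x^\alpha x_{j+1}/x_j\in J$. For a Borel ideal $J$, its $x_1$-saturation $J_{x_0x_1}$ is the ideal generated by the terms obtained by setting $x_0=x_1=1$ in the minimal monomial generators of $J$. $p_{S/I}(z)$ denotes the Hilbert polynomial of $S/I$. *)

theory Defs
  imports "HOL-Computational_Algebra.Polynomial"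
begin

text \<open>Monomials (terms) of S = K[x_0,...,x_n] are encoded by their exponent vectors
  alpha :: nat => nat with alpha i = 0 for i > n. A monomial ideal of S is determined by
  the set of monomials it contains, which is an upward closed (under divisibility) set of
  exponent vectors; we represent monomial ideals by this set.\<close>

definition mons :: "nat \<Rightarrow> (nat \<Rightarrow> nat) set" where
  "mons n = {\<alpha>. \<forall>i>n. \<alpha> i = 0}"

definition mdeg :: "nat \<Rightarrow> (nat \<Rightarrow> nat) \<Rightarrow> nat" where
  "mdeg n \<alpha> = (\<Sum>i\<le>n. \<alpha> i)"

definition monomial_ideal :: "nat \<Rightarrow> (nat \<Rightarrow> nat) set \<Rightarrow> bool" where
  "monomial_ideal n J \<longleftrightarrow> J \<subseteq> mons n \<and>
     (\<forall>\<alpha>\<in>J. \<forall>\<beta>\<in>mons n. (\<lambda>i. \<alpha> i + \<beta> i) \<in> J)"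

definition borel_ideal :: "nat \<Rightarrow> (nat \<Rightarrow> nat) set \<Rightarrow> bool" where
  "borel_ideal n J \<longleftrightarrow> monomial_ideal n J \<and>
     (\<forall>\<alpha>\<in>J. \<forall>j<n. \<alpha> j > 0 \<longrightarrow> \<alpha>(j := \<alpha> j - 1, Suc j := \<alpha> (Suc j) + 1) \<in> J)"

text \<open>Hilbert function of S/J: dim_K (S/J)_s = number of degree-s monomials not in J.\<close>
definition hilb_fun :: "nat \<Rightarrow> (nat \<Rightarrow> nat) set \<Rightarrow> nat \<Rightarrow> nat" where
  "hilb_fun n J s = card {\<alpha>\<in>mons n. mdeg n \<alpha> = s \<and> \<alpha> \<notin> J}"

definition hilb_poly :: "nat \<Rightarrow> (nat \<Rightarrow> nat) set \<Rightarrow> rat poly" where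
  "hilb_poly n J = (THE p. \<exists>s0. \<forall>s\<ge>s0. poly p (of_nat s) = of_nat (hilb_fun n J s))"

definition min_gens :: "(nat \<Rightarrow> nat) set \<Rightarrow> (nat \<Rightarrow> nat) set" where
  "min_gens J = {\<alpha>\<in>J. \<forall>\<beta>\<in>J. (\<forall>i. \<beta> i \<le> \<alpha> i) \<longrightarrow> \<beta> = \<alpha>}"

definition mon_gen :: "nat \<Rightarrow> (nat \<Rightarrow> nat) set \<Rightarrow> (nat \<Rightarrow> nat) set" where
  "mon_gen n G = {\<gamma>\<in>mons n. \<exists>g\<in>G. \<forall>i. g i \<le> \<gamma> i}"

text \<open>x_1-saturation J_{x0 x1}: generated by minimal generators with x_0 = x_1 = 1.\<close>
definition sat01 :: "nat \<Rightarrow> (nat \<Rightarrow> nat) set \<Rightarrow> (nat \<Rightarrow> nat) set" where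
  "sat01 n J = mon_gen n ((\<lambda>\<alpha>. \<alpha>(0 := 0, 1 := 0)) ` min_gens J)"

end

theory Submission
  imports Defs "HOL-Library.FuncSet"
begin


definition D :: "nat \<Rightarrow> nat \<Rightarrow> (nat \<Rightarrow> nat) set" where
  "D n s = {\<alpha>\<in>mons n. mdeg n \<alpha> = s}"

lemma D_finite: "finite (D n s)"
proof (rule inj_on_finite[where f="\<lambda>\<alpha>. restrict \<alpha> {..n}" and B="PiE {..n} (\<lambda>_. {..s})"])
  show "inj_on (\<lambda>\<alpha>. restrict \<alpha> {..n}) (D n s)"
  proof (rule inj_onI)
    fix x y assume x: "x \<in> D n s" and y: "y \<in> D n s" and e: "restrict x {..n} = restrict y {..n}"
    show "x = y"
    proof
      fix i show "x i = y i"
      proof (cases "i \<le> n")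
        case True
        have "restrict x {..n} i = restrict y {..n} i" using e by simp
        then show ?thesis using True by simp
      next
        case False then show ?thesis using x y by (auto simp: D_def mons_def)
      qed
    qed
  qed
  show "(\<lambda>\<alpha>. restrict \<alpha> {..n}) ` D n s \<subseteq> PiE {..n} (\<lambda>_. {..s})"
  proof
    fix f assume "f \<in> (\<lambda>\<alpha>. restrict \<alpha> {..n}) ` D n s"
    then obtain \<alpha> where a: "\<alpha> \<in> D n s" and f: "f = restrict \<alpha> {..n}" by blast
    have "\<forall>i\<le>n. \<alpha> i \<le> s"
    proof (intro allI impI)
      fix i assume "i \<le> n"
      then have "\<alpha> i \<le> (\<Sum>j\<le>n. \<alpha> j)" by (intro member_le_sum) auto
      then show "\<alpha> i \<le> s" using a by (simp add: D_def mdeg_def)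
    qed
    then show "f \<in> PiE {..n} (\<lambda>_. {..s})" using f by auto
  qed
  show "finite (PiE {..n} (\<lambda>_. {..s}))" by (rule finite_PiE) auto
qed

lemma D_Suc_slice:
  "card {\<alpha>\<in>D (Suc n) s. \<alpha> (Suc n) = j} = (if j \<le> s then card (D n (s - j)) else 0)"
proof -
  have mdS: "mdeg (Suc n) \<alpha> = mdeg n \<alpha> + \<alpha> (Suc n)" for \<alpha> by (simp add: mdeg_def)
  show ?thesis
  proof (cases "j \<le> s")
    case True
    have "bij_betw (\<lambda>\<alpha>. \<alpha>(Suc n := 0)) {\<alpha>\<in>D (Suc n) s. \<alpha> (Suc n) = j} (D n (s - j))"
    proof (rule bij_betw_byWitness[where f'="\<lambda>\<beta>. \<beta>(Suc n := j)"])
      show "\<forall>a\<in>{\<alpha> \<in> D (Suc n) s. \<alpha> (Suc n) = j}. (a(Suc n := 0))(Suc n := j) = a" by auto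
      show "\<forall>a'\<in>D n (s - j). (a'(Suc n := j))(Suc n := 0) = a'"
        by (auto simp: D_def mons_def)
      have md: "mdeg n (\<alpha>(Suc n := x)) = mdeg n \<alpha>" for \<alpha> x by (simp add: mdeg_def)
      show "(\<lambda>\<alpha>. \<alpha>(Suc n := 0)) ` {\<alpha> \<in> D (Suc n) s. \<alpha> (Suc n) = j} \<subseteq> D n (s - j)"
        using mdS by (auto simp: D_def mons_def md)
      show "(\<lambda>\<beta>. \<beta>(Suc n := j)) ` D n (s - j) \<subseteq> {\<alpha> \<in> D (Suc n) s. \<alpha> (Suc n) = j}"
        using True mdS by (auto simp: D_def mons_def md)
    qed
    then show ?thesis using True by (simp add: bij_betw_same_card)
  next
    case False
    have e0: "{\<alpha>\<in>D (Suc n) s. \<alpha> (Suc n) = j} = {}" using False mdS by (auto simp: D_def)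
    show ?thesis using False by (subst e0) simp
  qed
qed

lemma D_card: "card (D n s) = (n + s choose s)"
proof (induction n arbitrary: s)
  case 0
  have "D 0 s = {(\<lambda>i. 0)(0 := s)}"
    by (auto simp: D_def mons_def mdeg_def fun_eq_iff)
  then show ?case by simp
next
  case (Suc n)
  have eq: "D (Suc n) s = (\<Union>j\<in>{..s}. {\<alpha>\<in>D (Suc n) s. \<alpha> (Suc n) = j})"
  proof -
    have "\<alpha> (Suc n) \<le> s" if "\<alpha> \<in> D (Suc n) s" for \<alpha>
      using that by (auto simp: D_def mdeg_def)
    then show ?thesis by auto
  qed
  have "card (\<Union>j\<in>{..s}. {\<alpha>\<in>D (Suc n) s. \<alpha> (Suc n) = j}) = (\<Sum>j\<le>s. card {\<alpha>\<in>D (Suc n) s. \<alpha> (Suc n) = j})"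
    by (rule card_UN_disjoint) (auto simp: D_finite)
  then have "card (D (Suc n) s) = (\<Sum>j\<le>s. card {\<alpha>\<in>D (Suc n) s. \<alpha> (Suc n) = j})"
    using eq by simp
  also have "\<dots> = (\<Sum>j\<le>s. (n + (s - j) choose (s - j)))"
    by (simp add: D_Suc_slice Suc)
  also have "\<dots> = (\<Sum>k\<le>s. (n + k choose k))"
    by (rule sum.reindex_bij_witness[where i="\<lambda>k. s - k" and j="\<lambda>k. s - k"]) auto
  also have "\<dots> = (Suc n + s choose s)" by (simp add: sum_choose_lower)
  finally show ?case .
qed



definition evpoly :: "(nat \<Rightarrow> int) \<Rightarrow> bool" where
  "evpoly f \<longleftrightarrow> (\<exists>p::rat poly. \<exists>s0. \<forall>s\<ge>s0. poly p (of_nat s) = of_int (f s))"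

lemma evpoly_add: "evpoly f \<Longrightarrow> evpoly g \<Longrightarrow> evpoly (\<lambda>s. f s + g s)"
proof -
  assume "evpoly f" "evpoly g"
  then obtain p q s0 s1 where p: "\<forall>s\<ge>s0. poly p (of_nat s) = (of_int (f s) :: rat)"
    and q: "\<forall>s\<ge>s1. poly q (of_nat s) = (of_int (g s) :: rat)" unfolding evpoly_def by blast
  have "\<forall>s\<ge>max s0 s1. poly (p + q) (of_nat s) = of_int (f s + g s)" using p q by simp
  then show ?thesis unfolding evpoly_def by blast
qed

lemma evpoly_diff: "evpoly f \<Longrightarrow> evpoly g \<Longrightarrow> evpoly (\<lambda>s. f s - g s)"
proof -
  assume "evpoly f" "evpoly g"
  then obtain p q s0 s1 where p: "\<forall>s\<ge>s0. poly p (of_nat s) = (of_int (f s) :: rat)"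
    and q: "\<forall>s\<ge>s1. poly q (of_nat s) = (of_int (g s) :: rat)" unfolding evpoly_def by blast
  have "\<forall>s\<ge>max s0 s1. poly (p - q) (of_nat s) = of_int (f s - g s)" using p q by simp
  then show ?thesis unfolding evpoly_def by blast
qed

lemma evpoly_const: "evpoly (\<lambda>s. c)"
proof -
  have "\<forall>s\<ge>0. poly [:of_int c:] (of_nat s) = (of_int c :: rat)" by simp
  then show ?thesis unfolding evpoly_def by blast
qed

lemma evpoly_ev: "evpoly f \<Longrightarrow> \<forall>s\<ge>m. g s = f s \<Longrightarrow> evpoly g"
proof -
  assume "evpoly f" and e: "\<forall>s\<ge>m. g s = f s"
  then obtain p s0 where p: "\<forall>s\<ge>s0. poly p (of_nat s) = (of_int (f s) :: rat)" unfolding evpoly_def by blast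
  have "\<forall>s\<ge>max s0 m. poly p (of_nat s) = (of_int (g s) :: rat)" using p e by simp
  then show ?thesis unfolding evpoly_def by blast
qed

lemma evpoly_shift: "evpoly f \<Longrightarrow> evpoly (\<lambda>s. if d \<le> s then f (s - d) else 0)"
proof -
  assume "evpoly f"
  then obtain p s0 where p: "\<forall>s\<ge>s0. poly p (of_nat s) = (of_int (f s) :: rat)" unfolding evpoly_def by blast
  have "\<forall>s\<ge>s0 + d. poly (pcompose p [:- of_nat d, 1:]) (of_nat s) = (of_int (if d \<le> s then f (s - d) else 0) :: rat)"
  proof (intro allI impI)
    fix s assume s: "s0 + d \<le> s"
    have "of_nat (s - d) = (of_nat s - of_nat d :: rat)" using s by (simp add: of_nat_diff)
    then have "poly (pcompose p [:- of_nat d, 1:]) (of_nat s) = poly p (of_nat (s - d))"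
      by (simp add: poly_pcompose)
    also have "\<dots> = of_int (f (s - d))" using p s by (metis add_le_imp_le_diff)
    finally show "poly (pcompose p [:- of_nat d, 1:]) (of_nat s) = (of_int (if d \<le> s then f (s - d) else 0) :: rat)"
      using s by simp
  qed
  then show ?thesis unfolding evpoly_def by blast
qed

lemma binom_poly: "\<exists>p::rat poly. \<forall>s. poly p (of_nat s) = of_nat (n + s choose n)"
proof (induction n)
  case 0
  have "\<forall>s. poly 1 (of_nat s) = (of_nat (0 + s choose 0) :: rat)" by simp
  then show ?case by blast
next
  case (Suc n)
  then obtain p :: "rat poly" where p: "\<forall>s. poly p (of_nat s) = of_nat (n + s choose n)" by blast
  have "poly (smult (1 / (of_nat n + 1)) ([:of_nat n + 1, 1:] * p)) (of_nat s) = of_nat (Suc n + s choose Suc n)" for s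
  proof -
    have e: "Suc (n + s) * (n + s choose n) = (Suc (n + s) choose Suc n) * Suc n"
      by (rule Suc_times_binomial_eq)
    have "(of_nat (Suc (n + s)) :: rat) * of_nat (n + s choose n) = of_nat (Suc (n + s) choose Suc n) * of_nat (Suc n)"
      using arg_cong[OF e, of "of_nat :: nat \<Rightarrow> rat"] by (simp only: of_nat_mult)
    then show ?thesis using p by (simp add: field_simps)
  qed
  then show ?case by blast
qed

lemma evpoly_binom: "evpoly (\<lambda>s. int (n + s choose s))"
proof -
  obtain p :: "rat poly" where p: "\<forall>s. poly p (of_nat s) = of_nat (n + s choose n)" using binom_poly by blast
  have "n + s choose s = n + s choose n" for s
    using binomial_symmetric[of s "n + s"] by simp
  then have "\<forall>s\<ge>0. poly p (of_nat s) = of_int (int (n + s choose s))" using p by simp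
  then show ?thesis unfolding evpoly_def by blast
qed



lemma mdeg_mono: "(\<And>i. \<beta> i \<le> \<alpha> i) \<Longrightarrow> mdeg n \<beta> \<le> mdeg n \<alpha>"
  unfolding mdeg_def by (rule sum_mono) auto

lemma up_count:
  assumes b: "\<beta> \<in> mons n"
  shows "card (mon_gen n {\<beta>} \<inter> D n s) = (if mdeg n \<beta> \<le> s then card (D n (s - mdeg n \<beta>)) else 0)"
proof (cases "mdeg n \<beta> \<le> s")
  case True
  have "bij_betw (\<lambda>\<alpha> i. \<alpha> i - \<beta> i) (mon_gen n {\<beta>} \<inter> D n s) (D n (s - mdeg n \<beta>))"
  proof (rule bij_betw_byWitness[where f'="\<lambda>\<gamma> i. \<gamma> i + \<beta> i"])
    show "\<forall>a\<in>mon_gen n {\<beta>} \<inter> D n s. (\<lambda>i. a i - \<beta> i + \<beta> i) = a"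
      by (auto simp: mon_gen_def)
    show "\<forall>a'\<in>D n (s - mdeg n \<beta>). (\<lambda>i. a' i + \<beta> i - \<beta> i) = a'" by auto
    show "(\<lambda>\<alpha> i. \<alpha> i - \<beta> i) ` (mon_gen n {\<beta>} \<inter> D n s) \<subseteq> D n (s - mdeg n \<beta>)"
    proof
      fix x assume "x \<in> (\<lambda>\<alpha> i. \<alpha> i - \<beta> i) ` (mon_gen n {\<beta>} \<inter> D n s)"
      then obtain \<alpha> where a: "\<alpha> \<in> mon_gen n {\<beta>}" "\<alpha> \<in> D n s" and x: "x = (\<lambda>i. \<alpha> i - \<beta> i)" by blast
      have le: "\<forall>i. \<beta> i \<le> \<alpha> i" using a by (auto simp: mon_gen_def)
      have "mdeg n x = mdeg n \<alpha> - mdeg n \<beta>"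
        unfolding x mdeg_def using le by (simp add: sum_subtractf_nat)
      then show "x \<in> D n (s - mdeg n \<beta>)" using a x by (auto simp: D_def mons_def)
    qed
    show "(\<lambda>\<gamma> i. \<gamma> i + \<beta> i) ` D n (s - mdeg n \<beta>) \<subseteq> mon_gen n {\<beta>} \<inter> D n s"
    proof
      fix x assume "x \<in> (\<lambda>\<gamma> i. \<gamma> i + \<beta> i) ` D n (s - mdeg n \<beta>)"
      then obtain \<gamma> where g: "\<gamma> \<in> D n (s - mdeg n \<beta>)" and x: "x = (\<lambda>i. \<gamma> i + \<beta> i)" by blast
      have "mdeg n x = mdeg n \<gamma> + mdeg n \<beta>" unfolding x mdeg_def by (simp add: sum.distrib)
      then show "x \<in> mon_gen n {\<beta>} \<inter> D n s" using g x b True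
        by (auto simp: D_def mons_def mon_gen_def)
    qed
  qed
  then show ?thesis using True by (simp add: bij_betw_same_card)
next
  case False
  have "\<alpha> \<notin> mon_gen n {\<beta>} \<inter> D n s" for \<alpha>
  proof
    assume "\<alpha> \<in> mon_gen n {\<beta>} \<inter> D n s"
    then have "\<forall>i. \<beta> i \<le> \<alpha> i" "mdeg n \<alpha> = s" by (auto simp: mon_gen_def D_def)
    then show False using False mdeg_mono[of \<beta> \<alpha> n] by auto
  qed
  then have e0: "mon_gen n {\<beta>} \<inter> D n s = {}" by blast
  show ?thesis using False by (subst e0) simp
qed

lemma evpoly_up:
  assumes b: "\<beta> \<in> mons n"
  shows "evpoly (\<lambda>s. int (card (mon_gen n {\<beta>} \<inter> D n s)))"
proof -
  have "evpoly (\<lambda>s. if mdeg n \<beta> \<le> s then int (n + (s - mdeg n \<beta>) choose (s - mdeg n \<beta>)) else 0)"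
    using evpoly_shift[OF evpoly_binom[of n], of "mdeg n \<beta>"] by simp
  then show ?thesis by (rule evpoly_ev[where m=0]) (simp add: up_count[OF b] D_card)
qed

lemma mon_gen_insert: "mon_gen n (insert g G) = mon_gen n {g} \<union> mon_gen n G"
  by (auto simp: mon_gen_def)

lemma mon_gen_Int: "mon_gen n {g} \<inter> mon_gen n G = mon_gen n ((\<lambda>h i. max (g i) (h i)) ` G)"
  by (auto simp: mon_gen_def)

lemma evpoly_gen:
  "finite G \<Longrightarrow> G \<subseteq> mons n \<Longrightarrow> evpoly (\<lambda>s. int (card (mon_gen n G \<inter> D n s)))"
proof (induction "card G" arbitrary: G rule: less_induct)
  case less
  show ?case
  proof (cases "G = {}")
    case True
    then show ?thesis by (simp add: mon_gen_def evpoly_const)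
  next
    case False
    then obtain g where gG: "g \<in> G" by blast
    define G' where "G' = G - {g}"
    have G: "G = insert g G'" and g: "g \<notin> G'" using gG unfolding G'_def by auto
    have fG': "finite G'" using less.prems G by auto
    have cG': "card G' < card G" using G g fG' by simp
    let ?H = "(\<lambda>h i. max (g i) (h i)) ` G'"
    have cH: "card ?H < card G" using card_image_le[OF fG'] cG' by (meson le_less_trans)
    have gm: "g \<in> mons n" using less.prems(2) gG by blast
    have Hm: "?H \<subseteq> mons n"
    proof
      fix x assume "x \<in> ?H"
      then obtain h where h: "h \<in> G'" and x: "x = (\<lambda>i. max (g i) (h i))" by blast
      have "h \<in> mons n" using h G less.prems(2) by blast
      then show "x \<in> mons n" using gm x by (simp add: mons_def)
    qed
    have G'm: "G' \<subseteq> mons n" using G less.prems(2) by blast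
    have e1: "evpoly (\<lambda>s. int (card (mon_gen n G' \<inter> D n s)))"
      by (rule less.hyps[OF cG' fG' G'm])
    have e2: "evpoly (\<lambda>s. int (card (mon_gen n ?H \<inter> D n s)))"
      by (rule less.hyps[OF cH finite_imageI[OF fG'] Hm])
    have e3: "evpoly (\<lambda>s. int (card (mon_gen n {g} \<inter> D n s)))" by (rule evpoly_up[OF gm])
    have eq: "int (card (mon_gen n G \<inter> D n s)) =
        int (card (mon_gen n {g} \<inter> D n s)) + int (card (mon_gen n G' \<inter> D n s)) - int (card (mon_gen n ?H \<inter> D n s))" for s
    proof -
      have f1: "finite (mon_gen n {g} \<inter> D n s)" "finite (mon_gen n G' \<inter> D n s)"
        using D_finite by auto
      have "(mon_gen n {g} \<inter> D n s) \<union> (mon_gen n G' \<inter> D n s) = mon_gen n G \<inter> D n s"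
        using G mon_gen_insert by blast
      moreover have "(mon_gen n {g} \<inter> D n s) \<inter> (mon_gen n G' \<inter> D n s) = mon_gen n ?H \<inter> D n s"
        using mon_gen_Int[of n g G'] by blast
      ultimately show ?thesis using card_Un_Int[OF f1] by simp
    qed
    show ?thesis
      by (rule evpoly_ev[where m=0, OF evpoly_diff[OF evpoly_add[OF e3 e1] e2]]) (simp add: eq)
  qed
qed



lemma antichain_finite:
  "finite K \<Longrightarrow> \<forall>b\<in>A. \<forall>c\<in>A. \<forall>i. i \<notin> K \<longrightarrow> b i = c i
   \<Longrightarrow> \<forall>b\<in>A. \<forall>c\<in>A. (\<forall>i. b i \<le> c i) \<longrightarrow> b = c \<Longrightarrow> finite (A :: (nat \<Rightarrow> nat) set)"
proof (induction "card K" arbitrary: K A rule: less_induct)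
  case less
  show ?case
  proof (cases "A = {}")
    case True then show ?thesis by simp
  next
    case False
    then obtain a where aA: "a \<in> A" by blast
    have sub: "A \<subseteq> insert a (\<Union>i\<in>K. \<Union>v\<in>{..<a i}. {b\<in>A. b i = v})"
    proof
      fix b assume bA: "b \<in> A"
      show "b \<in> insert a (\<Union>i\<in>K. \<Union>v\<in>{..<a i}. {b\<in>A. b i = v})"
      proof (cases "b = a")
        case True then show ?thesis by simp
      next
        case False
        have "\<not> (\<forall>i. a i \<le> b i)" using less.prems(3) aA bA False by blast
        then obtain i where i: "b i < a i" by (meson not_le)
        have "i \<in> K" using less.prems(2) aA bA i by (metis less_irrefl)
        then show ?thesis using i bA by blast
      qed
    qed
    have "finite {b\<in>A. b i = v}" if iK: "i \<in> K" for i v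
    proof -
      have c: "card (K - {i}) < card K" using iK less.prems(1) by (meson card_Diff1_less)
      show ?thesis
      proof (rule less.hyps[OF c])
        show "finite (K - {i})" using less.prems(1) by simp
        show "\<forall>b\<in>{b \<in> A. b i = v}. \<forall>c\<in>{b \<in> A. b i = v}. \<forall>j. j \<notin> K - {i} \<longrightarrow> b j = c j"
          using less.prems(2) by auto
        show "\<forall>b\<in>{b \<in> A. b i = v}. \<forall>c\<in>{b \<in> A. b i = v}. (\<forall>i. b i \<le> c i) \<longrightarrow> b = c"
          using less.prems(3) by auto
      qed
    qed
    then have "finite (insert a (\<Union>i\<in>K. \<Union>v\<in>{..<a i}. {b\<in>A. b i = v}))"
      using less.prems(1) by auto
    then show ?thesis using sub finite_subset by blast
  qed
qed

lemma min_gens_finite: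
  assumes "J \<subseteq> mons n" shows "finite (min_gens J)"
proof (rule antichain_finite[where K="{..n}"])
  show "finite {..n}" by simp
  show "\<forall>b\<in>min_gens J. \<forall>c\<in>min_gens J. \<forall>i. i \<notin> {..n} \<longrightarrow> b i = c i"
  proof (intro ballI allI impI)
    fix b c i assume "b \<in> min_gens J" "c \<in> min_gens J" "i \<notin> {..n}"
    then have "b \<in> mons n" "c \<in> mons n" "i > n" using assms by (auto simp: min_gens_def)
    then show "b i = c i" by (simp add: mons_def)
  qed
  show "\<forall>b\<in>min_gens J. \<forall>c\<in>min_gens J. (\<forall>i. b i \<le> c i) \<longrightarrow> b = c"
    by (auto simp: min_gens_def)
qed

lemma below_min:
  assumes Jm: "J \<subseteq> mons n" and aJ: "\<alpha> \<in> J"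
  shows "\<exists>g\<in>min_gens J. \<forall>i. g i \<le> \<alpha> i"
proof -
  let ?P = "\<lambda>\<beta>. \<beta> \<in> J \<and> (\<forall>i. \<beta> i \<le> \<alpha> i)"
  have "?P \<alpha>" using aJ by simp
  then obtain \<beta> where b: "?P \<beta>" and bm: "\<forall>y. ?P y \<longrightarrow> mdeg n \<beta> \<le> mdeg n y"
    using ex_has_least_nat[of ?P \<alpha> "mdeg n"] by blast
  have "\<beta> \<in> min_gens J"
    unfolding min_gens_def
  proof (intro CollectI conjI ballI impI)
    show "\<beta> \<in> J" using b by simp
    fix \<gamma> assume gJ: "\<gamma> \<in> J" and le: "\<forall>i. \<gamma> i \<le> \<beta> i"
    show "\<gamma> = \<beta>"
    proof (rule ccontr)
      assume ne: "\<gamma> \<noteq> \<beta>"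
      then obtain i where i: "\<gamma> i \<noteq> \<beta> i" by (auto simp: fun_eq_iff)
      have bM: "\<beta> \<in> mons n" and gM: "\<gamma> \<in> mons n" using b gJ Jm by auto
      have "i \<le> n"
      proof (rule ccontr)
        assume "\<not> i \<le> n"
        then have "i > n" by simp
        then show False using i bM gM by (simp add: mons_def)
      qed
      moreover have "\<gamma> i < \<beta> i" using i le by (meson le_neq_implies_less)
      ultimately have "mdeg n \<gamma> < mdeg n \<beta>"
        unfolding mdeg_def using le by (intro sum_strict_mono_ex1) auto
      moreover have "?P \<gamma>" using gJ le b le_trans by blast
      ultimately show False using bm by (meson not_le)
    qed
  qed
  then show ?thesis using b by blast
qed

lemma mon_gen_min:
  assumes "monomial_ideal n J" shows "mon_gen n (min_gens J) = J"
proof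
  have Jm: "J \<subseteq> mons n" using assms by (simp add: monomial_ideal_def)
  show "J \<subseteq> mon_gen n (min_gens J)"
    using below_min[OF Jm] Jm unfolding mon_gen_def by blast
  show "mon_gen n (min_gens J) \<subseteq> J"
  proof
    fix \<gamma> assume "\<gamma> \<in> mon_gen n (min_gens J)"
    then obtain g where gM: "\<gamma> \<in> mons n" and g: "g \<in> J" and le: "\<forall>i. g i \<le> \<gamma> i"
      by (auto simp: mon_gen_def min_gens_def)
    have "(\<lambda>i. \<gamma> i - g i) \<in> mons n" using gM by (simp add: mons_def)
    then have "(\<lambda>i. g i + (\<gamma> i - g i)) \<in> J" using assms g by (simp add: monomial_ideal_def)
    moreover have "(\<lambda>i. g i + (\<gamma> i - g i)) = \<gamma>" using le by (simp add: fun_eq_iff)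
    ultimately show "\<gamma> \<in> J" by simp
  qed
qed

lemma hilb_fun_evpoly:
  assumes "monomial_ideal n J" shows "evpoly (\<lambda>s. int (hilb_fun n J s))"
proof -
  have Jm: "J \<subseteq> mons n" using assms by (simp add: monomial_ideal_def)
  have mm: "min_gens J \<subseteq> mons n" using Jm by (auto simp: min_gens_def)
  have e1: "evpoly (\<lambda>s. int (card (J \<inter> D n s)))"
    using evpoly_gen[OF min_gens_finite[OF Jm] mm] mon_gen_min[OF assms] by simp
  have e0: "evpoly (\<lambda>s. int (card (D n s)))"
    using evpoly_binom[of n] by (simp add: D_card)
  have eq: "int (hilb_fun n J s) = int (card (D n s)) - int (card (J \<inter> D n s))" for s
  proof -
    have "{\<alpha>\<in>mons n. mdeg n \<alpha> = s \<and> \<alpha> \<notin> J} = D n s - (J \<inter> D n s)" by (auto simp: D_def)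
    moreover have "card (D n s - (J \<inter> D n s)) = card (D n s) - card (J \<inter> D n s)"
      by (rule card_Diff_subset) (auto intro: finite_subset[OF _ D_finite])
    moreover have "card (J \<inter> D n s) \<le> card (D n s)" by (rule card_mono[OF D_finite]) auto
    ultimately show ?thesis unfolding hilb_fun_def by simp
  qed
  show ?thesis by (rule evpoly_ev[where m=0, OF evpoly_diff[OF e0 e1]]) (simp add: eq)
qed

lemma poly_unique:
  fixes p q :: "rat poly"
  assumes "\<forall>s\<ge>s0. poly p (of_nat s) = poly q (of_nat s)"
  shows "p = q"
proof (rule ccontr)
  assume "p \<noteq> q"
  then have "p - q \<noteq> 0" by simp
  then have f: "finite {x. poly (p - q) x = 0}" by (rule poly_roots_finite)
  have "of_nat ` {s0..} \<subseteq> {x. poly (p - q) x = 0}" using assms by auto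
  then have "finite (of_nat ` {s0..} :: rat set)" using f finite_subset by blast
  moreover have "inj_on (of_nat :: nat \<Rightarrow> rat) {s0..}" by (simp add: inj_on_def)
  ultimately have "finite {s0..}" using finite_image_iff by blast
  then show False using infinite_Ici by blast
qed

lemma hilb_poly_spec:
  assumes "monomial_ideal n J"
  shows "\<exists>s0. \<forall>s\<ge>s0. poly (hilb_poly n J) (of_nat s) = of_nat (hilb_fun n J s)"
proof -
  obtain p s0 where p: "\<forall>s\<ge>s0. poly p (of_nat s) = (of_int (int (hilb_fun n J s)) :: rat)"
    using hilb_fun_evpoly[OF assms] unfolding evpoly_def by blast
  have P: "\<exists>s0. \<forall>s\<ge>s0. poly p (of_nat s) = of_nat (hilb_fun n J s)" using p by auto
  have "hilb_poly n J = p"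
    unfolding hilb_poly_def
  proof (rule the_equality)
    show "\<exists>s0. \<forall>s\<ge>s0. poly p (of_nat s) = of_nat (hilb_fun n J s)" by (rule P)
    fix q assume "\<exists>s0. \<forall>s\<ge>s0. poly q (of_nat s) = (of_nat (hilb_fun n J s) :: rat)"
    then obtain s1 where q: "\<forall>s\<ge>s1. poly q (of_nat s) = (of_nat (hilb_fun n J s) :: rat)" by blast
    have "\<forall>s\<ge>max s0 s1. poly q (of_nat s) = poly p (of_nat s)" using p q by simp
    then show "q = p" by (rule poly_unique)
  qed
  then show ?thesis using P by simp
qed



lemma upward:
  assumes "monomial_ideal n J" "g \<in> J" "\<delta> \<in> mons n" "\<forall>i. g i \<le> \<delta> i"
  shows "\<delta> \<in> J"
proof -
  have "(\<lambda>i. \<delta> i - g i) \<in> mons n" using assms(3) by (simp add: mons_def)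
  then have "(\<lambda>i. g i + (\<delta> i - g i)) \<in> J" using assms(1,2) by (simp add: monomial_ideal_def)
  moreover have "(\<lambda>i. g i + (\<delta> i - g i)) = \<delta>" using assms(4) by (simp add: fun_eq_iff)
  ultimately show ?thesis by simp
qed

definition bump :: "(nat \<Rightarrow> nat) \<Rightarrow> nat \<Rightarrow> nat \<Rightarrow> nat" where
  "bump \<gamma> k = (\<lambda>i. if i \<le> 1 then \<gamma> i + k else \<gamma> i)"

lemma bump_mons: "1 \<le> n \<Longrightarrow> \<gamma> \<in> mons n \<Longrightarrow> bump \<gamma> k \<in> mons n"
  by (simp add: bump_def mons_def)

lemma mdeg_split: "1 \<le> n \<Longrightarrow> mdeg n f = f 0 + f 1 + (\<Sum>i\<in>{2..n}. f i)"
proof -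
  assume n: "1 \<le> n"
  have "{..n} = insert 0 (insert 1 {2..n})" using n by auto
  then show ?thesis unfolding mdeg_def by simp
qed

lemma sat01_char:
  assumes n: "1 \<le> n" and J: "monomial_ideal n J"
  shows "sat01 n J = {\<gamma>\<in>mons n. \<exists>k. bump \<gamma> k \<in> J}"
proof
  have Jm: "J \<subseteq> mons n" using J by (simp add: monomial_ideal_def)
  show "sat01 n J \<subseteq> {\<gamma>\<in>mons n. \<exists>k. bump \<gamma> k \<in> J}"
  proof
    fix \<gamma> assume "\<gamma> \<in> sat01 n J"
    then obtain g where gM: "\<gamma> \<in> mons n" and g: "g \<in> min_gens J"
      and le: "\<forall>i. (g(0 := 0, 1 := 0)) i \<le> \<gamma> i"
      unfolding sat01_def mon_gen_def by blast
    have gJ: "g \<in> J" using g by (simp add: min_gens_def)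
    have "\<forall>i. g i \<le> bump \<gamma> (g 0 + g 1) i"
    proof
      fix i show "g i \<le> bump \<gamma> (g 0 + g 1) i"
        using le[rule_format, of i] by (cases "i = 0"; cases "i = 1") (auto simp: bump_def)
    qed
    then have "bump \<gamma> (g 0 + g 1) \<in> J" using upward[OF J gJ bump_mons[OF n gM]] by blast
    then show "\<gamma> \<in> {\<gamma>\<in>mons n. \<exists>k. bump \<gamma> k \<in> J}" using gM by blast
  qed
  show "{\<gamma>\<in>mons n. \<exists>k. bump \<gamma> k \<in> J} \<subseteq> sat01 n J"
  proof
    fix \<gamma> assume "\<gamma> \<in> {\<gamma>\<in>mons n. \<exists>k. bump \<gamma> k \<in> J}"
    then obtain k where gM: "\<gamma> \<in> mons n" and b: "bump \<gamma> k \<in> J" by blast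
    obtain g where g: "g \<in> min_gens J" and le: "\<forall>i. g i \<le> bump \<gamma> k i"
      using below_min[OF Jm b] by blast
    have "\<forall>i. (g(0 := 0, 1 := 0)) i \<le> \<gamma> i"
    proof
      fix i show "(g(0 := 0, 1 := 0)) i \<le> \<gamma> i"
        using le[rule_format, of i] by (cases "i = 0"; cases "i = 1") (auto simp: bump_def)
    qed
    then show "\<gamma> \<in> sat01 n J" using gM g unfolding sat01_def mon_gen_def by blast
  qed
qed

lemma borel_move:
  assumes n: "1 \<le> n" and B: "borel_ideal n I"
  shows "\<alpha> \<in> I \<Longrightarrow> \<alpha>(0 := 0, 1 := \<alpha> 0 + \<alpha> 1) \<in> I"
proof (induction "\<alpha> 0" arbitrary: \<alpha>)
  case 0
  then have "\<alpha>(0 := 0, 1 := \<alpha> 0 + \<alpha> 1) = \<alpha>" by (simp add: fun_eq_iff)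
  then show ?case using 0 by metis
next
  case (Suc t)
  have "\<alpha>(0 := \<alpha> 0 - 1, Suc 0 := \<alpha> (Suc 0) + 1) \<in> I"
    using B Suc.prems Suc.hyps(2) n unfolding borel_ideal_def by force
  moreover define \<alpha>' where "\<alpha>' = \<alpha>(0 := \<alpha> 0 - 1, Suc 0 := \<alpha> (Suc 0) + 1)"
  ultimately have a': "\<alpha>' \<in> I" by simp
  have "t = \<alpha>' 0" using Suc.hyps(2) by (simp add: \<alpha>'_def)
  from Suc.hyps(1)[OF this a'] have "\<alpha>'(0 := 0, 1 := \<alpha>' 0 + \<alpha>' 1) \<in> I" .
  moreover have "\<alpha>'(0 := 0, 1 := \<alpha>' 0 + \<alpha>' 1) = \<alpha>(0 := 0, 1 := \<alpha> 0 + \<alpha> 1)"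
    using Suc.hyps(2) by (simp add: \<alpha>'_def fun_eq_iff)
  ultimately show ?case by simp
qed



theorem mainTheorem12:
  fixes n :: nat and I J :: "(nat \<Rightarrow> nat) set" and a :: nat
  assumes "1 \<le> n"
    and "borel_ideal n I" and "borel_ideal n J"
    and "\<exists>s0. \<forall>\<alpha>\<in>I. mdeg n \<alpha> \<ge> s0 \<longrightarrow> \<alpha> \<in> J"
    and "hilb_poly n I = hilb_poly n J + [:of_nat a:]"
  shows "sat01 n I = sat01 n J"
proof -
  have n: "1 \<le> n" by (rule assms(1))
  have mI: "monomial_ideal n I" and mJ: "monomial_ideal n J"
    using assms(2,3) by (auto simp: borel_ideal_def)
  obtain s0 where inc: "\<forall>\<alpha>\<in>I. mdeg n \<alpha> \<ge> s0 \<longrightarrow> \<alpha> \<in> J" using assms(4) by blast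
  obtain t1 where h1: "\<forall>s\<ge>t1. poly (hilb_poly n I) (of_nat s) = (of_nat (hilb_fun n I s) :: rat)"
    using hilb_poly_spec[OF mI] by blast
  obtain t2 where h2: "\<forall>s\<ge>t2. poly (hilb_poly n J) (of_nat s) = (of_nat (hilb_fun n J s) :: rat)"
    using hilb_poly_spec[OF mJ] by blast
  define S where "S = max s0 (max t1 t2)"
  have cnt: "hilb_fun n I s = hilb_fun n J s + a" if s: "S \<le> s" for s
  proof -
    have "(of_nat (hilb_fun n I s) :: rat) = poly (hilb_poly n I) (of_nat s)" using h1 s by (simp add: S_def)
    also have "\<dots> = poly (hilb_poly n J) (of_nat s) + of_nat a" using assms(5) by simp
    also have "\<dots> = of_nat (hilb_fun n J s) + of_nat a" using h2 s by (simp add: S_def)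
    finally have "(of_nat (hilb_fun n I s) :: rat) = of_nat (hilb_fun n J s + a)" by simp
    then show ?thesis by (simp only: of_nat_eq_iff)
  qed
  have X: "card {\<alpha>\<in>D n s. \<alpha> \<in> J \<and> \<alpha> \<notin> I} = a" if s: "S \<le> s" for s
  proof -
    let ?X = "{\<alpha>\<in>D n s. \<alpha> \<in> J \<and> \<alpha> \<notin> I}"
    let ?A = "{\<alpha>\<in>mons n. mdeg n \<alpha> = s \<and> \<alpha> \<notin> J}"
    have "{\<alpha>\<in>mons n. mdeg n \<alpha> = s \<and> \<alpha> \<notin> I} = ?A \<union> ?X"
      using inc s by (auto simp: D_def S_def)
    moreover have "finite ?A" "finite ?X"
      by (auto intro: finite_subset[OF _ D_finite[of n s]] simp: D_def)
    moreover have "?A \<inter> ?X = {}" by blast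
    ultimately have "hilb_fun n I s = hilb_fun n J s + card ?X"
      unfolding hilb_fun_def by (simp add: card_Un_disjoint)
    then show ?thesis using cnt[OF s] by simp
  qed
  have "{\<gamma>\<in>mons n. \<exists>k. bump \<gamma> k \<in> I} = {\<gamma>\<in>mons n. \<exists>k. bump \<gamma> k \<in> J}"
  proof (intro set_eqI iffI)
    fix \<gamma> assume "\<gamma> \<in> {\<gamma>\<in>mons n. \<exists>k. bump \<gamma> k \<in> I}"
    then obtain k where gM: "\<gamma> \<in> mons n" and bI: "bump \<gamma> k \<in> I" by blast
    have "\<forall>i. bump \<gamma> k i \<le> bump \<gamma> (k + s0) i" by (simp add: bump_def)
    then have b2: "bump \<gamma> (k + s0) \<in> I" using upward[OF mI bI bump_mons[OF n gM]] by blast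
    have "mdeg n (bump \<gamma> (k + s0)) \<ge> s0" using mdeg_split[OF n, of "bump \<gamma> (k + s0)"]
      by (simp add: bump_def)
    then have "bump \<gamma> (k + s0) \<in> J" using inc b2 by blast
    then show "\<gamma> \<in> {\<gamma>\<in>mons n. \<exists>k. bump \<gamma> k \<in> J}" using gM by blast
  next
    fix \<gamma> assume "\<gamma> \<in> {\<gamma>\<in>mons n. \<exists>k. bump \<gamma> k \<in> J}"
    then obtain k where gM: "\<gamma> \<in> mons n" and bJ: "bump \<gamma> k \<in> J" by blast
    have "\<exists>m. bump \<gamma> m \<in> I"
    proof (rule ccontr)
      assume nI: "\<not> (\<exists>m. bump \<gamma> m \<in> I)"
      define r where "r = S + a"
      define s where "s = mdeg n \<gamma> + 2 * k + r"
      define \<delta> where "\<delta> = (\<lambda>i j. if j = 0 then \<gamma> 0 + k + i else if j = 1 then \<gamma> 1 + k + (r - i) else \<gamma> j)"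
      have \<delta>M: "\<delta> i \<in> mons n" for i using gM n by (auto simp: \<delta>_def mons_def)
      have \<delta>deg: "mdeg n (\<delta> i) = s" if i: "i \<le> r" for i
      proof -
        have "(\<Sum>j\<in>{2..n}. \<delta> i j) = (\<Sum>j\<in>{2..n}. \<gamma> j)" by (rule sum.cong) (auto simp: \<delta>_def)
        then show ?thesis using mdeg_split[OF n, of "\<delta> i"] mdeg_split[OF n, of \<gamma>] i
          by (simp add: \<delta>_def s_def)
      qed
      have \<delta>J: "\<delta> i \<in> J" for i
        by (rule upward[OF mJ bJ \<delta>M]) (simp add: \<delta>_def bump_def)
      have \<delta>nI: "\<delta> i \<notin> I" if i: "i \<le> r" for i
      proof
        assume "\<delta> i \<in> I"
        then have bI: "(\<delta> i)(0 := 0, 1 := \<delta> i 0 + \<delta> i 1) \<in> I" by (rule borel_move[OF n assms(2)])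
        have "\<forall>j. ((\<delta> i)(0 := 0, 1 := \<delta> i 0 + \<delta> i 1)) j \<le> bump \<gamma> (\<gamma> 0 + 2 * k + r) j"
          using i by (simp add: \<delta>_def bump_def)
        then have "bump \<gamma> (\<gamma> 0 + 2 * k + r) \<in> I" using upward[OF mI bI bump_mons[OF n gM]] by blast
        then show False using nI by blast
      qed
      have inj: "inj_on \<delta> {..r}"
      proof (rule inj_onI)
        fix x y assume "\<delta> x = \<delta> y"
        then have "\<delta> x 0 = \<delta> y 0" by simp
        then show "x = y" by (simp add: \<delta>_def)
      qed
      have sub: "\<delta> ` {..r} \<subseteq> {\<alpha>\<in>D n s. \<alpha> \<in> J \<and> \<alpha> \<notin> I}"
        using \<delta>M \<delta>deg \<delta>J \<delta>nI by (auto simp: D_def)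
      have "card (\<delta> ` {..r}) \<le> card {\<alpha>\<in>D n s. \<alpha> \<in> J \<and> \<alpha> \<notin> I}"
        by (rule card_mono[OF _ sub]) (auto intro: finite_subset[OF _ D_finite[of n s]])
      moreover have "card (\<delta> ` {..r}) = Suc r" using card_image[OF inj] by simp
      moreover have "card {\<alpha>\<in>D n s. \<alpha> \<in> J \<and> \<alpha> \<notin> I} = a" by (rule X) (simp add: s_def r_def)
      ultimately show False by (simp add: r_def)
    qed
    then show "\<gamma> \<in> {\<gamma>\<in>mons n. \<exists>k. bump \<gamma> k \<in> I}" using gM by blast
  qed
  then show ?thesis using sat01_char[OF n mI] sat01_char[OF n mJ] by simp
qed

end
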